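(* Let $q$ be a prime power and $m,n$ positive integers. For every primitive polynomial $f(X)\in\mathbb{F}_q[X]$ of degree $mn$ there exists an $(m,n)$-block companion matrix $T$ over $\mathbb{F}_q$ with $T\in \mathrm{GL}_{mn}(\mathbb{F}_q)$, $o(T)=q^{mn}-1$, and $\det(XI_{mn}-T)=f(X)$. In other words, the map $\Psi$ sending a matrix $T\in\mathrm{BCM}(m,n;q)\cap\mathrm{GL}_{mn}(\mathbb{F}_q)$ with $o(T)=q^{mn}-1$ to its characteristic polynomial $\det(XI_{mn}-T)$ is a surjection onto the set of primitive polynomials of degree $mn$ in $\mathbb{F}_q[X]$.
   Context: A monic polynomial $f(X)\in\mathbb{F}_q[X]$ of degree $d$ is primitive if $f(0)\neq 0$ and the least positive integer $e$ with $f(X)\mid X^e-1$ equals $q^d-1$. For $T\in\mathrm{GL}_{mn}(\mathbb{F}_q)$, $o(T)$ is its order in this group. An $(m,n)$-block companion matrix over $\mathbb{F}_q$ is an $mn\times mn$ matrix, written in $n\times n$ blocks of size $m\times m$, whose last block column is $(C_0,C_1,\dots,C_{n-1})^{T}$ for some $C_0,\dots,C_{n-1}\in M_m(\mathbb{F}_q)$, whose block in position $(i+1,i)$ is the identity $I_m$ for $i=1,\dots,n-1$, and all of whose other blocks are zero; $\mathrm{BCM}(m,n;q)$ denotes the set of all such matrices. *)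

theory Defs
  imports "Jordan_Normal_Form.Char_Poly"
begin

text \<open>Finite field F_q is modelled by a type 'a of class finite field; q = card (UNIV :: 'a set).\<close>

definition primitive_poly :: "'a::{field,finite} poly \<Rightarrow> nat \<Rightarrow> bool" where
  "primitive_poly f d \<longleftrightarrow>
     monic f \<and> degree f = d \<and> poly f 0 \<noteq> 0 \<and>
     (LEAST e::nat. 0 < e \<and> f dvd (monom 1 e - 1)) = card (UNIV :: 'a set) ^ d - 1"

definition mat_order :: "'a::field mat \<Rightarrow> nat" where
  "mat_order T = (LEAST e::nat. 0 < e \<and> T ^\<^sub>m e = 1\<^sub>m (dim_row T))"

text \<open>(m,n)-block companion matrix with last block column C 0, ..., C (n-1)
  (blocks indexed from 0); identity blocks at block positions (k+1,k).\<close>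
definition block_companion :: "nat \<Rightarrow> nat \<Rightarrow> (nat \<Rightarrow> 'a::field mat) \<Rightarrow> 'a mat" where
  "block_companion m n C = mat (m*n) (m*n) (\<lambda>(i,j).
     if j div m = n - 1 then C (i div m) $$ (i mod m, j mod m)
     else if i div m = j div m + 1 then (if i mod m = j mod m then 1 else 0)
     else 0)"

definition BCM :: "nat \<Rightarrow> nat \<Rightarrow> 'a::field mat set" where
  "BCM m n = {block_companion m n C | C. \<forall>k<n. C k \<in> carrier_mat m m}"

end

theory Submission
  imports Defs
begin


definition sg :: "nat \<Rightarrow> nat \<Rightarrow> nat \<Rightarrow> nat" where "sg m n k = (k mod n)*m + k div n"
definition tg :: "nat \<Rightarrow> nat \<Rightarrow> nat \<Rightarrow> nat" where "tg m n i = (i mod m)*n + i div m"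

lemma sg_facts: assumes k: "k < m*n"
  shows "sg m n k < m*n" "sg m n k div m = k mod n" "sg m n k mod m = k div n" "tg m n (sg m n k) = k"
proof -
  have n: "0 < n" and m: "0 < m" using k by (auto intro: Nat.gr0I)
  have d: "k div n < m" using k by (simp add: less_mult_imp_div_less)
  have md: "k mod n < n" using n by simp
  have "(k mod n)*m + k div n < (k mod n)*m + m" using d by simp
  also have "\<dots> = (k mod n + 1)*m" by simp
  also have "\<dots> \<le> n*m" using md by (intro mult_le_mono1) simp
  finally show 1: "sg m n k < m*n" unfolding sg_def by (simp add: mult.commute)
  show 2: "sg m n k div m = k mod n" unfolding sg_def using d m by simp
  show 3: "sg m n k mod m = k div n" unfolding sg_def using d by simp
  show "tg m n (sg m n k) = k" unfolding tg_def 2 3 by (simp add: mult.commute)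
qed

lemma tg_facts: assumes k: "k < m*n"
  shows "tg m n k < m*n" "sg m n (tg m n k) = k"
proof -
  have k': "k < n*m" using k by (simp add: mult.commute)
  have n: "0 < n" and m: "0 < m" using k by (auto intro: Nat.gr0I)
  have d: "k div m < n" using k' by (simp add: less_mult_imp_div_less)
  have md: "k mod m < m" using m by simp
  have "(k mod m)*n + k div m < (k mod m)*n + n" using d by simp
  also have "\<dots> = (k mod m + 1)*n" by simp
  also have "\<dots> \<le> m*n" using md by (intro mult_le_mono1) simp
  finally show 1: "tg m n k < m*n" unfolding tg_def .
  have 2: "tg m n k div n = k mod m" unfolding tg_def using d n by simp
  have 3: "tg m n k mod n = k div m" unfolding tg_def using d by simp
  show "sg m n (tg m n k) = k" unfolding sg_def 2 3 by (simp add: mult.commute)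
qed

lemma sg_inj: "i < m*n \<Longrightarrow> j < m*n \<Longrightarrow> sg m n i = sg m n j \<longleftrightarrow> i = j"
  by (metis sg_facts(4))

lemma sg_bij: "bij_betw (sg m n) {..<m*n} {..<m*n}"
  by (rule bij_betw_byWitness[where f'="tg m n"]) (auto simp: sg_facts tg_facts)

lemma sg_0: "0 < m*n \<Longrightarrow> sg m n 0 = 0" by (simp add: sg_def)

lemma sg_Suc: assumes "Suc k < m*n" "k mod n = n - 1" shows "sg m n (Suc k) = k div n + 1"
proof -
  have n: "0 < n" using assms by (auto intro: Nat.gr0I)
  have e: "Suc (k mod n) = n" using assms n by simp
  show ?thesis unfolding sg_def by (simp add: mod_Suc div_Suc e)
qed


definition Lc :: "nat \<Rightarrow> nat \<Rightarrow> 'a::field poly \<Rightarrow> nat \<Rightarrow> nat \<Rightarrow> 'a" where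
  "Lc m n f i t = (if t < m - 1 then (if i = t+1 then 1 else 0) else - coeff f (tg m n i))"

definition Tm :: "nat \<Rightarrow> nat \<Rightarrow> 'a::field poly \<Rightarrow> 'a mat" where
  "Tm m n f = block_companion m n (\<lambda>k. mat m m (\<lambda>(a,t). Lc m n f (k*m+a) t))"

lemma Tm_BCM: "Tm m n f \<in> BCM m n"
  unfolding Tm_def BCM_def by auto

lemma Tm_carrier: "Tm m n f \<in> carrier_mat (m*n) (m*n)"
  unfolding Tm_def block_companion_def by auto

lemma Tm_sg: assumes i: "i < m*n" and j: "j < m*n"
  shows "Tm m n f $$ (sg m n j, sg m n i) =
    (if i = m*n - 1 then - coeff f j else if j = i+1 then 1 else 0)"
proof -
  have n: "0 < n" and m: "0 < m" using i by (auto intro: Nat.gr0I)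
  note si = sg_facts[OF i] and sj = sg_facts[OF j]
  have ent: "Tm m n f $$ (sg m n j, sg m n i) =
     (if sg m n i div m = n - 1 then Lc m n f (sg m n j) (sg m n i mod m)
     else if sg m n j div m = sg m n i div m + 1 then (if sg m n j mod m = sg m n i mod m then 1 else 0)
     else 0)"
  proof -
    have d: "i div n < m" "j div n < m" using i j by (simp_all add: less_mult_imp_div_less)
    show ?thesis
    unfolding Tm_def block_companion_def using si(1) sj(1) m d
    by (simp add: sj(2,3) si(2,3) sg_def mult.commute)
  qed
  show ?thesis
  proof (cases "i = m*n - 1")
    case True
    obtain m' n' where mn: "m = Suc m'" "n = Suc n'" using m n by (metis gr0_implies_Suc)
    have ii: "i = n' + n * m'" using True mn by simp
    have "i mod n = n' mod n" unfolding ii by (rule mod_mult_self2)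
    moreover have "i div n = n' div n + m'" unfolding ii using n by simp
    ultimately have "i mod n = n - 1" "i div n = m - 1" using mn by simp_all
    then show ?thesis using ent True si sj m unfolding Lc_def by simp
  next
    case False
    then have i1: "Suc i < m*n" using i by simp
    show ?thesis
    proof (cases "i mod n = n - 1")
      case True
      have "i div n < m - 1"
      proof (rule ccontr)
        assume "\<not> ?thesis"
        then have "i div n = m - 1" using less_mult_imp_div_less[OF i] by linarith
        then have "i = n * (m - 1) + (n - 1)" using True div_mult_mod_eq[of i n] by (simp add: mult.commute)
        also have "\<dots> = m*n - 1" using m n by (simp add: algebra_simps diff_mult_distrib2)
        finally show False using False by simp
      qed
      moreover have "sg m n j = i div n + 1 \<longleftrightarrow> j = i + 1"
        using sg_Suc[OF i1 True] sg_inj[OF j i1] by simp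
      ultimately show ?thesis using ent False True si sj unfolding Lc_def by simp
    next
      case F2: False
      have "i mod n < n - 1" using F2 mod_less_divisor[OF n, of i] by linarith
      have ne: "Suc (i mod n) \<noteq> n" using \<open>i mod n < n - 1\<close> by simp
      have "(j mod n = i mod n + 1 \<and> j div n = i div n) \<longleftrightarrow> j = i + 1"
      proof
        assume h: "j mod n = i mod n + 1 \<and> j div n = i div n"
        have "j = n * (j div n) + j mod n" by simp
        also have "\<dots> = (n * (i div n) + i mod n) + 1" using h by simp
        finally show "j = i + 1" by simp
      next
        assume "j = i + 1"
        then show "j mod n = i mod n + 1 \<and> j div n = i div n" using ne by (simp add: mod_Suc div_Suc)
      qed
      then show ?thesis using ent False F2 si sj by auto
    qed
  qed
qed


definition Pv :: "nat \<Rightarrow> nat \<Rightarrow> 'a::field vec \<Rightarrow> 'a poly" where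
  "Pv m n w = (\<Sum>i<m*n. monom (w $ sg m n i) i)"

lemma coeff_Pv: "coeff (Pv m n w) j = (if j < m*n then w $ sg m n j else 0)"
  unfolding Pv_def coeff_sum coeff_monom by (simp add: sum.delta')

lemma Tm_mult_vec: assumes w: "w \<in> carrier_vec (m*n)" and j: "j < m*n"
  shows "(Tm m n f *\<^sub>v w) $ sg m n j =
     (if j = 0 then 0 else w $ sg m n (j - 1)) - coeff f j * w $ sg m n (m*n - 1)"
proof -
  let ?N = "m*n"
  have N: "0 < ?N" using j by linarith
  have sj: "sg m n j < ?N" using sg_facts(1)[OF j] .
  have "(Tm m n f *\<^sub>v w) $ sg m n j = (\<Sum>k\<in>{0..<?N}. Tm m n f $$ (sg m n j, k) * w $ k)"
    using Tm_carrier[of m n f] w sj by (simp add: scalar_prod_def)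
  also have "\<dots> = (\<Sum>i<?N. Tm m n f $$ (sg m n j, sg m n i) * w $ sg m n i)"
    unfolding atLeast0LessThan
    by (rule sum.reindex_bij_betw[OF sg_bij, symmetric])
  also have "\<dots> = (\<Sum>i<?N. (if i = ?N - 1 then - coeff f j else if j = i+1 then 1 else 0) * w $ sg m n i)"
    by (rule sum.cong) (auto simp: Tm_sg j)
  also have "\<dots> = (\<Sum>i<Suc (?N - 1). (if i = ?N - 1 then - coeff f j else if j = i+1 then 1 else 0) * w $ sg m n i)"
    using N by simp
  also have "\<dots> = (\<Sum>i<?N - 1. (if j = i+1 then w $ sg m n i else 0)) - coeff f j * w $ sg m n (?N - 1)"
    unfolding sum.lessThan_Suc by (simp add: if_distrib[of "\<lambda>x. x * _"] cong: if_cong)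
  also have "(\<Sum>i<?N - 1. (if j = i+1 then w $ sg m n i else 0)) = (\<Sum>i<?N - 1. (if i = j - 1 \<and> j \<noteq> 0 then w $ sg m n i else 0))"
    by (rule sum.cong) auto
  also have "\<dots> = (if j = 0 then 0 else w $ sg m n (j - 1))"
    using j by (auto simp: sum.delta')
  finally show ?thesis .
qed

lemma Pv_Tm: assumes w: "w \<in> carrier_vec (m*n)" and N: "0 < m*n" and deg: "degree f = m*n" and mon: "monic f"
  shows "Pv m n (Tm m n f *\<^sub>v w) = pCons 0 (Pv m n w) - Polynomial.smult (w $ sg m n (m*n - 1)) f"
proof (rule poly_eqI)
  fix j
  show "coeff (Pv m n (Tm m n f *\<^sub>v w)) j = coeff (pCons 0 (Pv m n w) - Polynomial.smult (w $ sg m n (m*n - 1)) f) j"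
  proof (cases "j < m*n")
    case True
    then show ?thesis unfolding coeff_Pv using Tm_mult_vec[OF w True]
      by (cases j) (auto simp: coeff_Pv)
  next
    case False
    show ?thesis
    proof (cases "j = m*n")
      case True
      then have "coeff f j = 1" using deg mon by simp
      moreover obtain k where k: "m*n = Suc k" using N gr0_implies_Suc by blast
      ultimately show ?thesis using True by (simp add: coeff_Pv)
    next
      case F2: False
      then have "coeff f j = 0" using deg False by (simp add: coeff_eq_0)
      then show ?thesis using F2 False N by (cases j) (auto simp: coeff_Pv)
    qed
  qed
qed


locale setup_f =
  fixes m n :: nat and f :: "'a::field poly"
  assumes m0: "0 < m" and n0: "0 < n" and deg: "degree f = m*n" and mon: "monic f"
begin

abbreviation "N \<equiv> m*n"
abbreviation "T \<equiv> Tm m n f"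

lemmas mn0[simp] = m0 n0
lemma N: "0 < N" by simp

lemma deg_Pv: "degree (Pv m n w) < N"
proof -
  have "degree (Pv m n w) \<le> N - 1" by (rule degree_le) (auto simp: coeff_Pv)
  then show ?thesis using N by linarith
qed

lemma Pv_mod: "Pv m n w mod f = Pv m n w"
  by (rule mod_poly_less) (simp add: deg_Pv deg)

lemma Pv_T: assumes w: "w \<in> carrier_vec N"
  shows "Pv m n (T *\<^sub>v w) = (pCons 0 (Pv m n w)) mod f"
proof -
  let ?s = "w $ sg m n (N - 1)"
  have "pCons 0 (Pv m n w) mod f = (pCons 0 (Pv m n w) - Polynomial.smult ?s f) mod f"
    unfolding mod_eq_dvd_iff by (simp add: dvd_smult)
  also have "\<dots> = Pv m n (T *\<^sub>v w) mod f" unfolding Pv_Tm[OF w N deg mon] ..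
  also have "\<dots> = Pv m n (T *\<^sub>v w)" by (rule Pv_mod)
  finally show ?thesis by simp
qed

lemma Pv_pow: assumes w: "w \<in> carrier_vec N"
  shows "Pv m n (T ^\<^sub>m e *\<^sub>v w) = (monom 1 e * Pv m n w) mod f"
  using w
proof (induction e arbitrary: w)
  case 0
  then show ?case using Pv_mod Tm_carrier[of m n f] by simp
next
  case (Suc e)
  have Tc: "T \<in> carrier_mat N N" by (rule Tm_carrier)
  have "T ^\<^sub>m Suc e *\<^sub>v w = T ^\<^sub>m e *\<^sub>v (T *\<^sub>v w)"
    using Tc Suc.prems by (simp add: assoc_mult_mat_vec[OF pow_carrier_mat[OF Tc] Tc Suc.prems])
  then have "Pv m n (T ^\<^sub>m Suc e *\<^sub>v w) = (monom 1 e * Pv m n (T *\<^sub>v w)) mod f"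
    using Suc.IH[of "T *\<^sub>v w"] Tc mult_mat_vec_carrier[OF Tc Suc.prems] by simp
  also have "\<dots> = (monom 1 e * pCons 0 (Pv m n w)) mod f"
    unfolding Pv_T[OF Suc.prems] by (simp add: mod_mult_right_eq)
  also have "monom 1 e * pCons 0 (Pv m n w) = monom 1 (Suc e) * Pv m n w"
    by (simp add: monom_Suc mult_pCons_right mult_pCons_left)
  finally show ?case .
qed

lemma Pv_inj: assumes v: "v \<in> carrier_vec N" and w: "w \<in> carrier_vec N" and e: "Pv m n v = Pv m n w"
  shows "v = w"
proof
  show "dim_vec v = dim_vec w" using v w by simp
  fix i assume "i < dim_vec w"
  then have i: "i < N" using w by simp
  have "coeff (Pv m n v) (tg m n i) = coeff (Pv m n w) (tg m n i)" using e by simp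
  then show "v $ i = w $ i" using tg_facts[OF i] by (simp add: coeff_Pv)
qed

lemma Pv_unit: "Pv m n (unit_vec N 0) = 1"
proof (rule poly_eqI)
  fix j
  show "coeff (Pv m n (unit_vec N 0)) j = coeff 1 j"
  proof (cases "j < N")
    case True
    then show ?thesis using sg_inj[OF True N] sg_0[OF N] sg_facts(1)[OF True] by (auto simp: coeff_Pv)
  next
    case False
    then have "j \<noteq> 0" using N by linarith
    then show ?thesis using False by (simp add: coeff_Pv)
  qed
qed

lemma Pv_zero: "Pv m n (0\<^sub>v N) = 0"
proof (rule poly_eqI)
  fix j
  show "coeff (Pv m n (0\<^sub>v N)) j = coeff 0 j"
  proof (cases "j < N")
    case True
    then show ?thesis using sg_facts(1)[OF True] by (auto simp: coeff_Pv)
  qed (auto simp: coeff_Pv)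
qed

lemma one_mod: "(1::'a poly) mod f = 1"
  by (rule mod_poly_less) (simp add: deg N)

lemma mat_eq_one: fixes A :: "'b::semiring_1 mat" assumes A: "A \<in> carrier_mat k k" and h: "\<And>w. w \<in> carrier_vec k \<Longrightarrow> A *\<^sub>v w = w"
  shows "A = 1\<^sub>m k"
proof
  fix i j assume i: "i < dim_row (1\<^sub>m k)" and j: "j < dim_col (1\<^sub>m k)"
  have "(A *\<^sub>v unit_vec k j) $ i = A $$ (i,j)" using A i j by simp
  then show "A $$ (i, j) = 1\<^sub>m k $$ (i, j)" using h[of "unit_vec k j"] i j by simp
qed (use A in auto)

lemma T_pow_one: "T ^\<^sub>m e = 1\<^sub>m N \<longleftrightarrow> f dvd monom 1 e - 1"
proof
  assume h: "T ^\<^sub>m e = 1\<^sub>m N"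
  have "(monom 1 e * 1) mod f = Pv m n (T ^\<^sub>m e *\<^sub>v unit_vec N 0)"
    using Pv_pow[of "unit_vec N 0" e] by (simp add: Pv_unit)
  also have "\<dots> = 1 mod f" using h Pv_unit one_mod by simp
  finally show "f dvd monom 1 e - 1" unfolding mod_eq_dvd_iff by simp
next
  assume d: "f dvd monom 1 e - 1"
  show "T ^\<^sub>m e = 1\<^sub>m N"
  proof (rule mat_eq_one)
    show "T ^\<^sub>m e \<in> carrier_mat N N" using Tm_carrier by (rule pow_carrier_mat)
    fix w :: "'a vec" assume w: "w \<in> carrier_vec N"
    have "f dvd monom 1 e * Pv m n w - Pv m n w"
      using dvd_mult2[OF d, of "Pv m n w"] by (simp add: algebra_simps)
    then have "(monom 1 e * Pv m n w) mod f = Pv m n w mod f" unfolding mod_eq_dvd_iff .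
    then have "Pv m n (T ^\<^sub>m e *\<^sub>v w) = Pv m n w" using Pv_pow[OF w] Pv_mod by simp
    moreover have c: "T ^\<^sub>m e *\<^sub>v w \<in> carrier_vec N"
      using mult_mat_vec_carrier[OF pow_carrier_mat[OF Tm_carrier] w] .
    ultimately show "T ^\<^sub>m e *\<^sub>v w = w" using Pv_inj[OF c w] by simp
  qed
qed

lemma T_inj: assumes f0: "poly f 0 \<noteq> 0" and w: "w \<in> carrier_vec N" and z: "T *\<^sub>v w = 0\<^sub>v N"
  shows "w = 0\<^sub>v N"
proof -
  let ?a = "Pv m n w"
  have "pCons 0 ?a mod f = Pv m n (T *\<^sub>v w)" using Pv_T[OF w] by simp
  also have "\<dots> = 0" unfolding z by (rule Pv_zero)
  finally have "pCons 0 ?a mod f = 0" .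
  then obtain k where k: "pCons 0 ?a = f * k" by (auto simp: mod_eq_0_iff_dvd elim!: dvdE)
  have "poly f 0 * poly k 0 = 0" using arg_cong[OF k, of "\<lambda>p. poly p 0"] by simp
  then have "poly k 0 = 0" using f0 by simp
  then have "[:0,1:] dvd k" using dvd_iff_poly_eq_0[of 0 k] by simp
  then obtain k' where k': "k = [:0,1:] * k'" by (auto elim!: dvdE)
  have "[:0,1:] * ?a = [:0,1:] * (f * k')" using k k' by (simp add: algebra_simps mult_pCons_left)
  then have "?a = f * k'" by (simp del: mult_pCons_left)
  then have "f dvd ?a" by simp
  have "?a = 0"
  proof (rule ccontr)
    assume "?a \<noteq> 0"
    with \<open>f dvd ?a\<close> have "degree f \<le> degree ?a" by (rule dvd_imp_degree_le)
    then show False using deg_Pv[of w] deg by linarith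
  qed
  then show ?thesis using Pv_inj[OF w _, of "0\<^sub>v N"] Pv_zero by simp
qed

lemma T_invertible: assumes f0: "poly f 0 \<noteq> 0" shows "invertible_mat T"
proof -
  have Tc: "T \<in> carrier_mat N N" by (rule Tm_carrier)
  have "det T \<noteq> 0"
    unfolding det_0_iff_vec_prod_zero_field[OF Tc] using T_inj[OF f0] by auto
  from det_non_zero_imp_unit[OF Tc this, of "()"]
  obtain B where B: "B \<in> carrier_mat N N" "B * T = 1\<^sub>m N" "T * B = 1\<^sub>m N"
    unfolding Units_def ring_mat_def by auto
  show ?thesis unfolding invertible_mat_def inverts_mat_def square_mat.simps
    using B Tc by auto
qed

end

definition cm :: "nat \<Rightarrow> (nat \<Rightarrow> 'a::comm_ring_1) \<Rightarrow> 'a poly mat" where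
  "cm N c = mat N N (\<lambda>(i,j). (if i = j then [:0,1:] else 0) +
      (if j = N - 1 then [:c i:] else if i = j+1 then -1 else 0))"

lemma neg1_pCons: "[:- (1::'a::comm_ring_1):] = -1"
  by (simp add: one_pCons)

lemma det_cm: "0 < N \<Longrightarrow> det (cm N c) = monom 1 N + (\<Sum>i<N. monom (c i) i)"
proof (induction N arbitrary: c rule: nat_induct_non_zero)
  case 1
  have "det (cm 1 c) = cm 1 c $$ (0,0)" by (rule det_single) (simp add: cm_def)
  also have "\<dots> = [:0,1:] + [:c 0:]" by (simp add: cm_def)
  finally show ?case by (simp add: monom_Suc monom_0)
next
  case (Suc N)
  let ?A = "cm (Suc N) c"
  have A: "?A \<in> carrier_mat (Suc N) (Suc N)" by (simp add: cm_def)
  have row0: "\<And>j. j < Suc N \<Longrightarrow> ?A $$ (0,j) = (if j = 0 then [:0,1:] else 0) + (if j = N then [:c 0:] else 0)"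
    by (auto simp: cm_def)
  have d1: "det ?A = (\<Sum>j<Suc N. ?A $$ (0,j) * cofactor ?A 0 j)"
    by (rule laplace_expansion_row[OF A]) simp
  also have "\<dots> = (\<Sum>j<Suc N. (if j = 0 then [:0,1:] * cofactor ?A 0 0 else 0) + (if j = N then [:c 0:] * cofactor ?A 0 N else 0))"
    by (rule sum.cong) (auto simp: row0 distrib_right)
  also have "\<dots> = [:0,1:] * cofactor ?A 0 0 + [:c 0:] * cofactor ?A 0 N"
    by (simp add: sum.distrib)
  finally have d1: "det ?A = [:0,1:] * cofactor ?A 0 0 + [:c 0:] * cofactor ?A 0 N" .
  have e1: "mat_delete ?A 0 0 = cm N (\<lambda>i. c (Suc i))"
    using Suc.hyps by (intro eq_matI) (auto simp: cm_def mat_delete_def)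
  have e2: "det (mat_delete ?A 0 N) = (-1)^N"
  proof -
    let ?D = "mat_delete ?A 0 N"
    have D: "?D \<in> carrier_mat N N" by (simp add: cm_def mat_delete_def)
    have ut: "upper_triangular ?D" unfolding upper_triangular_def
      by (auto simp: cm_def mat_delete_def)
    have "det ?D = prod_list (diag_mat ?D)" by (rule det_upper_triangular[OF ut D])
    also have "\<dots> = (\<Prod>i = 0..<N. -1)" unfolding prod_list_diag_prod
      by (rule prod.cong) (auto simp: cm_def mat_delete_def)
    finally show ?thesis by simp
  qed
  have "det ?A = [:0,1:] * (monom 1 N + (\<Sum>i<N. monom (c (Suc i)) i)) + [:c 0:]"
    unfolding d1 cofactor_def e1 e2 Suc.IH by (simp flip: power_add mult_2)
  also have "\<dots> = monom 1 (Suc N) + (\<Sum>i<Suc N. monom (c i) i)"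
    unfolding sum.lessThan_Suc_shift
    by (simp add: distrib_left sum_distrib_left monom_Suc monom_0 mult_pCons_left)
  finally show ?case .
qed

context setup_f begin

definition pp where "pp k = (if k < N then sg m n k else k)"

lemma pp_permutes: "pp permutes {0..<N}"
proof (rule bij_imp_permutes)
  have "bij_betw (sg m n) {0..<N} {0..<N}" using sg_bij[of m n] by (simp add: atLeast0LessThan)
  then show "bij_betw pp {0..<N} {0..<N}"
    by (rule bij_betw_cong[THEN iffD1, rotated]) (auto simp: pp_def)
qed (auto simp: pp_def)

lemma det_sym_perm: fixes A :: "'b::idom mat"
  assumes A: "A \<in> carrier_mat N N"
  shows "det (mat N N (\<lambda>(i,j). A $$ (pp i, pp j))) = det A"
proof -
  let ?B = "mat N N (\<lambda>(i,j). A $$ (pp i, j))"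
  let ?C = "mat N N (\<lambda>(i,j). A $$ (pp i, pp j))"
  have B: "?B \<in> carrier_mat N N" by simp
  have dB: "det ?B = signof pp * det A" by (rule det_permute_rows[OF A pp_permutes])
  have ppN: "\<And>i. i < N \<Longrightarrow> pp i < N" using pp_permutes
    by (meson atLeastLessThan_iff le0 permutes_in_image)
  have "transpose_mat ?C = mat N N (\<lambda>(i,j). transpose_mat ?B $$ (pp i, j))"
    by (rule eq_matI) (auto simp: ppN)
  then have "det (transpose_mat ?C) = signof pp * det (transpose_mat ?B)"
    using det_permute_rows[OF transpose_carrier_mat[THEN iffD2, OF B] pp_permutes] by simp
  then have "det ?C = signof pp * det ?B"
    using det_transpose[OF B] det_transpose[of ?C N] by simp
  moreover have "(of_int (sign pp) :: 'b) * of_int (sign pp) = 1"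
    by (cases "evenperm pp") (simp_all add: sign_def)
  ultimately show ?thesis using dB by (simp flip: mult.assoc)
qed

lemma char_poly_T: "char_poly T = f"
proof -
  let ?A = "char_poly_matrix T"
  have A: "?A \<in> carrier_mat N N" using char_poly_matrix_closed[OF Tm_carrier] .
  have "mat N N (\<lambda>(i,j). ?A $$ (pp i, pp j)) = cm N (coeff f)"
  proof (rule eq_matI)
    fix i j assume "i < dim_row (cm N (coeff f))" "j < dim_col (cm N (coeff f))"
    then have i: "i < N" and j: "j < N" by (auto simp: cm_def)
    have e: "T $$ (sg m n i, sg m n j) = (if j = N - 1 then - coeff f i else if i = j+1 then 1 else 0)"
      by (rule Tm_sg[OF j i])
    show "mat N N (\<lambda>(i,j). ?A $$ (pp i, pp j)) $$ (i, j) = cm N (coeff f) $$ (i, j)"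
      using i j sg_facts(1)[OF i] sg_facts(1)[OF j] sg_inj[OF i j] Tm_carrier[of m n f]
      by (auto simp: pp_def cm_def char_poly_matrix_def e neg1_pCons)
  qed (auto simp: cm_def)
  then have "char_poly T = det (cm N (coeff f))"
    unfolding char_poly_def using det_sym_perm[OF A] by simp
  also have "\<dots> = monom 1 N + (\<Sum>i<N. monom (coeff f i) i)" by (rule det_cm[OF N])
  also have "\<dots> = f"
  proof (rule poly_eqI)
    fix k
    show "coeff (monom 1 N + (\<Sum>i<N. monom (coeff f i) i)) k = coeff f k"
      using deg mon by (cases "k < N"; cases "k = N") (auto simp: coeff_sum coeff_monom coeff_eq_0)
  qed
  finally show ?thesis .
qed

end

theorem theorem6p1:
  fixes f :: "'a::{field,finite} poly" and m n :: nat
  assumes "0 < m" and "0 < n"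
    and "primitive_poly f (m * n)"
  shows "\<exists>T :: 'a mat. T \<in> BCM m n \<and> invertible_mat T \<and>
           mat_order T = card (UNIV :: 'a set) ^ (m * n) - 1 \<and> char_poly T = f"
proof -
  from assms(3) have mon: "monic f" and deg: "degree f = m*n" and f0: "poly f 0 \<noteq> 0"
    and lst: "(LEAST e::nat. 0 < e \<and> f dvd (monom 1 e - 1)) = card (UNIV :: 'a set) ^ (m*n) - 1"
    unfolding primitive_poly_def by auto
  interpret setup_f m n f using assms(1,2) deg mon by unfold_locales
  have "dim_row T = N" using Tm_carrier[of m n f] by simp
  then have "mat_order T = (LEAST e::nat. 0 < e \<and> f dvd (monom 1 e - 1))"
    unfolding mat_order_def using T_pow_one by simp
  then show ?thesis using Tm_BCM T_invertible[OF f0] char_poly_T lst by auto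
qed

end
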